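(* Let $H$ be a group with a metric $d$ and $r\ge3$ an integer. For every sequence $\beta_0=0<\beta_1<3\beta_1<\beta_2<3\beta_2<\cdots<\beta_{r-1}<3\beta_{r-1}<\beta_r$ we have $$H^r=\Delta(\beta_r)\cup\Big(\bigcup_{j=0}^{r-1}\ \bigcup_{\mathcal{Q}:\,|\mathcal{Q}|\ge2}\Delta_{\mathcal{Q}}(3\beta_j,\beta_{j+1})\Big),$$ where $\mathcal{Q}$ ranges over partitions of $[r]=\{1,\dots,r\}$ with at least two blocks.
   Context: For $\underline h=(h_1,\dots,h_r)\in H^r$ and $I,J\subset[r]$: $d^I(\underline h)=\max\{d(h_i,h_j):i,j\in I\}$, $d_{I,J}(\underline h)=\min\{d(h_i,h_j):i\in I,j\in J\}$. For a partition $\mathcal{Q}$ of $[r]$: $d^{\mathcal{Q}}(\underline h)=\max_{I\in\mathcal{Q}}d^I(\underline h)$, $d_{\mathcal{Q}}(\underline h)=\min\{d_{I,J}(\underline h):I\ne J,\ I,J\in\mathcal{Q}\}$, and $\Delta_{\mathcal{Q}}(\alpha,\beta)=\{\underline h\in H^r:d^{\mathcal{Q}}(\underline h)\le\alpha,\ d_{\mathcal{Q}}(\underline h)>\beta\}$. Also $\Delta(\beta)=\{\underline h\in H^r:\max_{i,j}d(h_i,h_j)\le\beta\}$. *)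

theory Defs
  imports Complex_Main "HOL-Algebra.Group" "HOL-Library.Disjoint_Sets"
begin

definition metric_on :: "'a set \<Rightarrow> ('a \<Rightarrow> 'a \<Rightarrow> real) \<Rightarrow> bool" where
  "metric_on S d \<longleftrightarrow>
     (\<forall>x\<in>S. \<forall>y\<in>S. 0 \<le> d x y \<and> (d x y = 0 \<longleftrightarrow> x = y) \<and> d x y = d y x) \<and>
     (\<forall>x\<in>S. \<forall>y\<in>S. \<forall>z\<in>S. d x z \<le> d x y + d y z)"

text \<open>Tuples in H^r are functions on [r] = {1..r}.\<close>
definition dsup :: "('a \<Rightarrow> 'a \<Rightarrow> real) \<Rightarrow> nat set \<Rightarrow> (nat \<Rightarrow> 'a) \<Rightarrow> real" where
  "dsup d I h = Max {d (h i) (h j) | i j. i \<in> I \<and> j \<in> I}"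

definition dinf :: "('a \<Rightarrow> 'a \<Rightarrow> real) \<Rightarrow> nat set \<Rightarrow> nat set \<Rightarrow> (nat \<Rightarrow> 'a) \<Rightarrow> real" where
  "dinf d I J h = Min {d (h i) (h j) | i j. i \<in> I \<and> j \<in> J}"

definition dsupQ :: "('a \<Rightarrow> 'a \<Rightarrow> real) \<Rightarrow> nat set set \<Rightarrow> (nat \<Rightarrow> 'a) \<Rightarrow> real" where
  "dsupQ d Q h = Max {dsup d I h | I. I \<in> Q}"

definition dinfQ :: "('a \<Rightarrow> 'a \<Rightarrow> real) \<Rightarrow> nat set set \<Rightarrow> (nat \<Rightarrow> 'a) \<Rightarrow> real" where
  "dinfQ d Q h = Min {dinf d I J h | I J. I \<in> Q \<and> J \<in> Q \<and> I \<noteq> J}"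

definition tuples :: "'a set \<Rightarrow> nat \<Rightarrow> (nat \<Rightarrow> 'a) set" where
  "tuples H r = PiE {1..r} (\<lambda>_. H)"

definition DeltaQ :: "'a set \<Rightarrow> ('a \<Rightarrow> 'a \<Rightarrow> real) \<Rightarrow> nat \<Rightarrow> nat set set \<Rightarrow> real \<Rightarrow> real \<Rightarrow> (nat \<Rightarrow> 'a) set" where
  "DeltaQ H d r Q \<alpha> \<beta> = {h \<in> tuples H r. dsupQ d Q h \<le> \<alpha> \<and> dinfQ d Q h > \<beta>}"

definition Delta :: "'a set \<Rightarrow> ('a \<Rightarrow> 'a \<Rightarrow> real) \<Rightarrow> nat \<Rightarrow> real \<Rightarrow> (nat \<Rightarrow> 'a) set" where
  "Delta H d r \<beta> = {h \<in> tuples H r. dsup d {1..r} h \<le> \<beta>}"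

end

theory Submission
  imports Defs
begin

lemma dsup_le:
  assumes "finite I" "I \<noteq> {}" "\<forall>i\<in>I. \<forall>k\<in>I. d (h i) (h k) \<le> c"
  shows "dsup d I h \<le> c"
proof -
  have e: "{d (h i) (h j) | i j. i \<in> I \<and> j \<in> I} = (\<lambda>(i,j). d (h i) (h j)) ` (I \<times> I)"
    by auto
  show ?thesis unfolding dsup_def e using assms
    by (subst Max_le_iff) auto
qed

lemma dinf_gt:
  assumes "finite I" "finite J" "I \<noteq> {}" "J \<noteq> {}" "\<forall>i\<in>I. \<forall>k\<in>J. c < d (h i) (h k)"
  shows "c < dinf d I J h"
proof -
  have e: "{d (h i) (h j) | i j. i \<in> I \<and> j \<in> J} = (\<lambda>(i,j). d (h i) (h j)) ` (I \<times> J)"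
    by auto
  show ?thesis unfolding dinf_def e using assms
    by (subst Min_gr_iff) auto
qed

lemma dsupQ_le:
  assumes "finite P" "P \<noteq> {}" "\<forall>I\<in>P. dsup d I h \<le> c"
  shows "dsupQ d P h \<le> c"
proof -
  have e: "{dsup d I h | I. I \<in> P} = (\<lambda>I. dsup d I h) ` P" by auto
  show ?thesis unfolding dsupQ_def e using assms
    by (subst Max_le_iff) auto
qed

lemma dinfQ_gt:
  assumes "finite P" "I0 \<in> P" "J0 \<in> P" "I0 \<noteq> J0"
    "\<forall>I\<in>P. \<forall>J\<in>P. I \<noteq> J \<longrightarrow> c < dinf d I J h"
  shows "c < dinfQ d P h"
proof -
  have e: "{dinf d I J h | I J. I \<in> P \<and> J \<in> P \<and> I \<noteq> J}
      = (\<lambda>(I,J). dinf d I J h) ` {(I,J). I \<in> P \<and> J \<in> P \<and> I \<noteq> J}"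
    by auto
  have f: "finite {(I,J). I \<in> P \<and> J \<in> P \<and> I \<noteq> J}"
    by (rule finite_subset[of _ "P \<times> P"]) (use assms in auto)
  show ?thesis unfolding dinfQ_def e using assms f
    by (subst Min_gr_iff) auto
qed

lemma partition_merge:
  assumes P: "partition_on A P" and I: "I \<in> P" and J: "J \<in> P" and IJ: "I \<noteq> J"
  shows "partition_on A (insert (I \<union> J) (P - {I, J}))"
    and "finite P \<Longrightarrow> card (insert (I \<union> J) (P - {I, J})) < card P"
proof -
  have d: "disjoint P" and u: "\<Union>P = A" and ne: "{} \<notin> P"
    using P by (auto simp: partition_on_def)
  show "partition_on A (insert (I \<union> J) (P - {I, J}))"
  proof (rule partition_onI)
    show "\<Union>(insert (I \<union> J) (P - {I, J})) = A" using u I J by auto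
    show "{} \<notin> insert (I \<union> J) (P - {I, J})" using ne I by auto
    fix p q assume p: "p \<in> insert (I \<union> J) (P - {I, J})" and q: "q \<in> insert (I \<union> J) (P - {I, J})"
      and pq: "p \<noteq> q"
    show "disjnt p q"
      using p q pq d I J unfolding disjoint_def disjnt_def by blast
  qed
  assume that: "finite P"
  have "card (insert (I \<union> J) (P - {I, J})) \<le> Suc (card (P - {I, J}))"
    by (rule card_insert_le_m1) auto
  also have "card (P - {I,J}) = card P - 2"
    using that I J IJ by (simp add: card_Diff_subset)
  also have "card P \<ge> 2"
  proof -
    have "card {I,J} \<le> card P" using that I J by (intro card_mono) auto
    thus ?thesis using IJ by simp
  qed
  ultimately show "card (insert (I \<union> J) (P - {I, J})) < card P" by linarith
qed

theorem proposition6p2: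
  fixes G :: "('a, 'b) monoid_scheme" and d :: "'a \<Rightarrow> 'a \<Rightarrow> real"
    and r :: nat and \<beta> :: "nat \<Rightarrow> real"
  assumes "group G"
    and "metric_on (carrier G) d"
    and "r \<ge> 3"
    and "\<beta> 0 = 0" and "\<beta> 0 < \<beta> 1"
    and "\<forall>j\<in>{1..r-1}. \<beta> j < 3 * \<beta> j \<and> 3 * \<beta> j < \<beta> (Suc j)"
  shows "tuples (carrier G) r =
           Delta (carrier G) d r (\<beta> r) \<union>
           (\<Union>j\<in>{0..r-1}. \<Union>Q\<in>{Q. partition_on {1..r} Q \<and> card Q \<ge> 2}.
              DeltaQ (carrier G) d r Q (3 * \<beta> j) (\<beta> (Suc j)))"
    (is "_ = ?R")
proof
  show "?R \<subseteq> tuples (carrier G) r"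
    by (auto simp: Delta_def DeltaQ_def)
next
  show "tuples (carrier G) r \<subseteq> ?R"
  proof
    fix h assume h: "h \<in> tuples (carrier G) r"
    have hH: "\<And>i. i \<in> {1..r} \<Longrightarrow> h i \<in> carrier G"
      using h by (auto simp: tuples_def PiE_def Pi_def)
    have met0: "\<And>x. x \<in> carrier G \<Longrightarrow> d x x = 0"
      and msym: "\<And>x y. x \<in> carrier G \<Longrightarrow> y \<in> carrier G \<Longrightarrow> d x y = d y x"
      and mtri: "\<And>x y z. x \<in> carrier G \<Longrightarrow> y \<in> carrier G \<Longrightarrow> z \<in> carrier G \<Longrightarrow> d x z \<le> d x y + d y z"
      using assms(2) unfolding metric_on_def by auto
    have b3: "3 * \<beta> j < \<beta> (Suc j)" if "j \<le> r - 1" for j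
    proof (cases "j = 0")
      case False
      hence "j \<in> {1..r-1}" using that by auto
      thus ?thesis using assms(6) by fastforce
    qed (use assms(4,5) in simp)
    have bnn: "0 \<le> \<beta> j" if "j \<le> r - 1" for j
    proof (cases "j = 0")
      case False
      hence "j \<in> {1..r-1}" using that by auto
      thus ?thesis using assms(6) by fastforce
    qed (use assms(4) in simp)
    have bmono: "\<beta> j \<le> \<beta> (Suc j)" if "j \<le> r - 1" for j
      using b3[OF that] bnn[OF that] by linarith
    have bmono2: "\<forall>j. j + k \<le> r \<longrightarrow> \<beta> j \<le> \<beta> (j + k)" for k
    proof (induction k)
      case 0 then show ?case by simp
    next
      case (Suc k)
      show ?case
      proof (intro allI impI)
        fix j assume "j + Suc k \<le> r"
        hence "\<beta> j \<le> \<beta> (j + k)" using Suc by simp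
        also have "\<beta> (j+k) \<le> \<beta> (Suc (j+k))" using \<open>j + Suc k \<le> r\<close> by (intro bmono) simp
        finally show "\<beta> j \<le> \<beta> (j + Suc k)" by simp
      qed
    qed
    have bler: "\<beta> j \<le> \<beta> r" if "j \<le> r" for j
      using spec[OF bmono2[of "r - j"], of j] that by simp
    define ok where "ok P c \<longleftrightarrow> (\<forall>I\<in>P. \<forall>i\<in>I. \<forall>k\<in>I. d (h i) (h k) \<le> c)" for P :: "nat set set" and c
    have fin: "finite P" if "partition_on {1..r} P" for P
      using finite_elements[OF _ that] by simp
    have finI: "finite I" "I \<noteq> {}" "I \<subseteq> {1..r}" if "partition_on {1..r} P" "I \<in> P" for P I
      using that finite_subset[of I "{1..r}"] by (auto simp: partition_on_def)
    have step: "h \<in> ?R \<or> (\<exists>P'. partition_on {1..r} P' \<and> card P' < card P \<and> ok P' (3 * \<beta> (Suc j)))"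
      if j: "j \<le> r - 1" and P: "partition_on {1..r} P" and okP: "ok P (3 * \<beta> j)" for j P
    proof (cases "\<exists>I\<in>P. \<exists>J\<in>P. I \<noteq> J \<and> (\<exists>i\<in>I. \<exists>k\<in>J. d (h i) (h k) \<le> \<beta> (Suc j))")
      case True
      then obtain I J i k where I: "I \<in> P" and J: "J \<in> P" and IJ: "I \<noteq> J"
        and i: "i \<in> I" and k: "k \<in> J" and dik: "d (h i) (h k) \<le> \<beta> (Suc j)" by blast
      let ?P' = "insert (I \<union> J) (P - {I, J})"
      have "partition_on {1..r} ?P'" using partition_merge(1)[OF P I J IJ] .
      moreover have "card ?P' < card P" using partition_merge(2)[OF P I J IJ fin[OF P]] .
      moreover have "ok ?P' (3 * \<beta> (Suc j))"
      proof -
        have sI: "I \<subseteq> {1..r}" and sJ: "J \<subseteq> {1..r}" using finI P I J by auto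
        have bj: "3 * \<beta> j \<le> 3 * \<beta> (Suc j)" using bmono[OF j] by simp
        have okI: "\<forall>a\<in>I. \<forall>b\<in>I. d (h a) (h b) \<le> 3 * \<beta> j"
          and okJ: "\<forall>a\<in>J. \<forall>b\<in>J. d (h a) (h b) \<le> 3 * \<beta> j"
          using okP I J unfolding ok_def by auto
        have cross: "d (h a) (h b) \<le> 3 * \<beta> (Suc j)" if a: "a \<in> I" and b: "b \<in> J" for a b
        proof -
          have ha: "h a \<in> carrier G" and hb: "h b \<in> carrier G" and hi: "h i \<in> carrier G"
            and hk: "h k \<in> carrier G" using hH sI sJ a b i k by auto
          have "d (h a) (h b) \<le> d (h a) (h i) + d (h i) (h b)" using mtri ha hi hb by blast
          also have "d (h i) (h b) \<le> d (h i) (h k) + d (h k) (h b)" using mtri hi hk hb by blast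
          finally have "d (h a) (h b) \<le> d (h a) (h i) + d (h i) (h k) + d (h k) (h b)" by simp
          moreover have "d (h a) (h i) \<le> 3 * \<beta> j" using okI a i by blast
          moreover have "d (h k) (h b) \<le> 3 * \<beta> j" using okJ k b by blast
          ultimately show ?thesis using dik b3[OF j] by linarith
        qed
        show ?thesis unfolding ok_def
        proof (intro ballI)
          fix K a b assume K: "K \<in> ?P'" and a: "a \<in> K" and b: "b \<in> K"
          show "d (h a) (h b) \<le> 3 * \<beta> (Suc j)"
          proof (cases "K = I \<union> J")
            case True
            show ?thesis
            proof -
              have ha: "h a \<in> carrier G" and hb: "h b \<in> carrier G"
                using hH sI sJ a b True by auto
              have "a \<in> I \<or> a \<in> J" "b \<in> I \<or> b \<in> J" using a b True by auto
              moreover have "a \<in> J \<Longrightarrow> b \<in> I \<Longrightarrow> d (h a) (h b) \<le> 3 * \<beta> (Suc j)"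
                using cross[of b a] msym[OF ha hb] by simp
              moreover have "a \<in> I \<Longrightarrow> b \<in> I \<Longrightarrow> d (h a) (h b) \<le> 3 * \<beta> (Suc j)"
                using okI bj by fastforce
              moreover have "a \<in> J \<Longrightarrow> b \<in> J \<Longrightarrow> d (h a) (h b) \<le> 3 * \<beta> (Suc j)"
                using okJ bj by fastforce
              moreover have "a \<in> I \<Longrightarrow> b \<in> J \<Longrightarrow> d (h a) (h b) \<le> 3 * \<beta> (Suc j)"
                using cross by blast
              ultimately show ?thesis by blast
            qed
          next
            case False
            hence "K \<in> P" using K by auto
            thus ?thesis using okP a b bj unfolding ok_def by fastforce
          qed
        qed
      qed
      ultimately show ?thesis by blast
    next
      case False
      note nocl = False
      have fP: "finite P" using fin[OF P] .
      have Pne: "P \<noteq> {}" using P assms(3) unfolding partition_on_def by auto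
      have dsupP: "dsupQ d P h \<le> 3 * \<beta> j"
      proof (intro dsupQ_le[OF fP Pne] ballI)
        fix I assume "I \<in> P"
        thus "dsup d I h \<le> 3 * \<beta> j"
          using okP finI[OF P \<open>I \<in> P\<close>] unfolding ok_def by (intro dsup_le) auto
      qed
      show ?thesis
      proof (cases "card P \<ge> 2")
        case True
        then obtain I0 J0 where IJ0: "I0 \<in> P" "J0 \<in> P" "I0 \<noteq> J0"
        proof -
          have "\<not> card P \<le> Suc 0" using True by linarith
          hence "\<not> (\<forall>a\<in>P. \<forall>b\<in>P. a = b)" using card_le_Suc0_iff_eq[OF fP] by simp
          thus ?thesis using that by blast
        qed
        have "\<beta> (Suc j) < dinfQ d P h"
        proof (rule dinfQ_gt[OF fP IJ0], intro ballI impI)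
          fix I J assume I: "I \<in> P" and J: "J \<in> P" and IJ: "I \<noteq> J"
          have "\<forall>i\<in>I. \<forall>k\<in>J. \<beta> (Suc j) < d (h i) (h k)"
            using \<open>\<not> (\<exists>I\<in>P. \<exists>J\<in>P. I \<noteq> J \<and> (\<exists>i\<in>I. \<exists>k\<in>J. d (h i) (h k) \<le> \<beta> (Suc j)))\<close> I J IJ
            by (meson not_le)
          thus "\<beta> (Suc j) < dinf d I J h"
            using finI[OF P I] finI[OF P J] by (intro dinf_gt) auto
        qed
        hence "h \<in> DeltaQ (carrier G) d r P (3 * \<beta> j) (\<beta> (Suc j))"
          using h dsupP by (simp add: DeltaQ_def)
        moreover have "j \<in> {0..r-1}" using j by simp
        ultimately show ?thesis using True P by blast
      next
        case False
        have "card P > 0" using fP Pne by auto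
        hence "card P = 1" using False by linarith
        then obtain I where PI: "P = {I}" by (auto simp: card_Suc_eq)
        hence "I = {1..r}" using P by (auto simp: partition_on_def)
        hence ok1: "\<forall>a\<in>{1..r}. \<forall>b\<in>{1..r}. d (h a) (h b) \<le> 3 * \<beta> j"
          using okP PI unfolding ok_def by simp
        have "Suc j \<le> r" using j assms(3) by linarith
        hence "3 * \<beta> j \<le> \<beta> r" using b3[OF j] bler[of "Suc j"] by linarith
        hence "\<forall>a\<in>{1..r}. \<forall>b\<in>{1..r}. d (h a) (h b) \<le> \<beta> r"
          using ok1 by fastforce
        hence "dsup d {1..r} h \<le> \<beta> r" using assms(3) by (intro dsup_le) auto
        hence "h \<in> Delta (carrier G) d r (\<beta> r)" using h by (simp add: Delta_def)
        thus ?thesis by auto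
      qed
    qed
    have claim: "j \<le> r - 1 \<longrightarrow> h \<in> ?R \<or> (\<exists>P. partition_on {1..r} P \<and> card P + j \<le> r \<and> ok P (3 * \<beta> j))" for j
    proof (induction j)
      case 0
      have "partition_on {1..r} ((\<lambda>x. {x}) ` {1..r})" by (rule partition_on_singletons)
      moreover have "card ((\<lambda>x. {x}) ` {1..r}) = r" by (subst card_image) (auto simp: inj_on_def)
      moreover have "ok ((\<lambda>x. {x}) ` {1..r}) (3 * \<beta> 0)"
        using met0 hH assms(4) unfolding ok_def by auto
      ultimately show ?case by auto
    next
      case (Suc j)
      show ?case
      proof
        assume sj: "Suc j \<le> r - 1"
        from Suc sj have "h \<in> ?R \<or> (\<exists>P. partition_on {1..r} P \<and> card P + j \<le> r \<and> ok P (3 * \<beta> j))" by simp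
        thus "h \<in> ?R \<or> (\<exists>P. partition_on {1..r} P \<and> card P + Suc j \<le> r \<and> ok P (3 * \<beta> (Suc j)))"
        proof
          assume "\<exists>P. partition_on {1..r} P \<and> card P + j \<le> r \<and> ok P (3 * \<beta> j)"
          then obtain P where "partition_on {1..r} P" "card P + j \<le> r" "ok P (3 * \<beta> j)" by blast
          have "j \<le> r - 1" using sj by simp
          from step[OF this \<open>partition_on {1..r} P\<close> \<open>ok P (3 * \<beta> j)\<close>]
          show ?thesis
          proof (elim disjE exE conjE)
            fix P' assume "partition_on {1..r} P'" "card P' < card P" "ok P' (3 * \<beta> (Suc j))"
            moreover have "card P' + Suc j \<le> r" using \<open>card P' < card P\<close> \<open>card P + j \<le> r\<close> by linarith
            ultimately show ?thesis by blast
          qed simp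
        qed simp
      qed
    qed
    from claim[of "r - 1"]
    show "h \<in> ?R"
    proof (elim impE disjE exE conjE)
      fix P assume P: "partition_on {1..r} P" and c: "card P + (r - 1) \<le> r" and o: "ok P (3 * \<beta> (r - 1))"
      have pos: "card P' \<ge> 1" if "partition_on {1..r} P'" for P'
        using that fin[OF that] assms(3) unfolding partition_on_def by (auto simp: Suc_le_eq card_gt_0_iff)
      have "card P \<le> 1" using c assms(3) by linarith
      from step[OF order_refl P o] show "h \<in> ?R"
      proof (elim disjE exE conjE)
        fix P' assume "partition_on {1..r} P'" "card P' < card P"
        with pos[of P'] \<open>card P \<le> 1\<close> show ?thesis by linarith
      qed auto
    qed auto
  qed
qed

end
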